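(* Let $h$ be a decreasing solution to the HJB equation. Then there is no non-empty interval $(a,b)\subset[0,\infty)$ such that $h''(z)=0$ for all $z\in(a,b)$.
   Context: Fix $\mu\in\mathbb R$, $\sigma>0$, $u_0>0$, $r>0$, $\beta>0$, $d>0$. The HJB equation is $$-rh(z)-\mu h'(z)+\tfrac{\sigma^2}{2}h''(z)+\sup_{u\in[0,u_0]}\{(\beta+h'(z))u\}=\mathbf 1_{\{z>d\}}.$$ A solution to the HJB equation is a function $h:[0,\infty)\to[\frac{\beta u_0-1}{r},\frac{\beta u_0}{r}]$ that is continuously differentiable on $[0,\infty)$, twice continuously differentiable on $[0,d]$ and on $(d,\infty)$ respectively (with $h'(0),h''(0)$ the right derivatives and $h''(d)$ the left second derivative), and satisfies the HJB equation for all $z\ge0$. *)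

theory Defs
  imports "HOL-Analysis.Analysis"
begin

text \<open>h is a solution to the HJB equation with parameters mu, sigma, u0, r, beta, d;
  dh and d2h are its first and second derivative (dh(0), d2h(0) right derivatives,
  d2h(d) the left second derivative).\<close>
definition hjb_solution ::
  "real \<Rightarrow> real \<Rightarrow> real \<Rightarrow> real \<Rightarrow> real \<Rightarrow> real \<Rightarrow>
   (real \<Rightarrow> real) \<Rightarrow> (real \<Rightarrow> real) \<Rightarrow> (real \<Rightarrow> real) \<Rightarrow> bool" where
  "hjb_solution \<mu> \<sigma> u0 r \<beta> d h dh d2h \<longleftrightarrow>
     (\<forall>z\<ge>0. (\<beta> * u0 - 1) / r \<le> h z \<and> h z \<le> \<beta> * u0 / r) \<and>
     (\<forall>z\<ge>0. (h has_real_derivative dh z) (at z within {0..})) \<and>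
     continuous_on {0..} dh \<and>
     (\<forall>z\<in>{0..d}. (dh has_real_derivative d2h z) (at z within {0..d})) \<and>
     continuous_on {0..d} d2h \<and>
     (\<forall>z>d. (dh has_real_derivative d2h z) (at z)) \<and>
     continuous_on {d<..} d2h \<and>
     (\<forall>z\<ge>0. - r * h z - \<mu> * dh z + \<sigma>\<^sup>2 / 2 * d2h z
               + (SUP u\<in>{0..u0}. (\<beta> + dh z) * u)
             = (if z > d then 1 else 0))"

end

theory Submission
  imports Defs
begin


lemma gron_fwd:
  fixes w w' :: "real \<Rightarrow> real"
  assumes "x0 \<le> x1" "continuous_on {x0..x1} w"
    "\<And>z. x0 < z \<Longrightarrow> z < x1 \<Longrightarrow> (w has_real_derivative w' z) (at z)"
    "\<And>z. x0 < z \<Longrightarrow> z < x1 \<Longrightarrow> \<bar>w' z\<bar> \<le> K * w z"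
    "\<And>z. x0 \<le> z \<Longrightarrow> z \<le> x1 \<Longrightarrow> w z \<ge> 0" "w x0 = 0"
  shows "w x1 = 0"
proof -
  let ?p = "\<lambda>z. exp (- K * z) * w z"
  have "?p x0 \<ge> ?p x1"
  proof (rule DERIV_nonpos_imp_decreasing_open[OF assms(1)])
    fix x assume x: "x0 < x" "x < x1"
    have "(?p has_real_derivative (exp (- K * x) * w' x + (- K * exp (- K * x)) * w x)) (at x)"
      by (rule derivative_eq_intros assms(3)[OF x] | simp)+
    moreover have "exp (- K * x) * w' x + (- K * exp (- K * x)) * w x = exp (- K * x) * (w' x - K * w x)"
      by (simp add: algebra_simps)
    moreover have "exp (- K * x) * (w' x - K * w x) \<le> 0"
      using assms(4)[OF x] by (intro mult_nonneg_nonpos) auto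
    ultimately show "\<exists>y. (?p has_real_derivative y) (at x) \<and> y \<le> 0" by metis
  next
    show "continuous_on {x0..x1} ?p"
      by (intro continuous_intros assms(2))
  qed
  then have "exp (- K * x1) * w x1 \<le> 0" using assms(6) by simp
  then have "w x1 \<le> 0" by (simp add: mult_le_0_iff)
  with assms(5)[of x1] assms(1) show ?thesis by simp
qed

lemma gron_bwd:
  fixes w w' :: "real \<Rightarrow> real"
  assumes "x0 \<le> x1" "continuous_on {x0..x1} w"
    "\<And>z. x0 < z \<Longrightarrow> z < x1 \<Longrightarrow> (w has_real_derivative w' z) (at z)"
    "\<And>z. x0 < z \<Longrightarrow> z < x1 \<Longrightarrow> \<bar>w' z\<bar> \<le> K * w z"
    "\<And>z. x0 \<le> z \<Longrightarrow> z \<le> x1 \<Longrightarrow> w z \<ge> 0" "w x1 = 0"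
  shows "w x0 = 0"
proof -
  let ?p = "\<lambda>z. exp (K * z) * w z"
  have "?p x0 \<le> ?p x1"
  proof (rule DERIV_nonneg_imp_increasing_open[OF assms(1)])
    fix x assume x: "x0 < x" "x < x1"
    have "(?p has_real_derivative (exp (K * x) * w' x + (K * exp (K * x)) * w x)) (at x)"
      by (rule derivative_eq_intros assms(3)[OF x] | simp)+
    moreover have "exp (K * x) * w' x + (K * exp (K * x)) * w x = exp (K * x) * (w' x + K * w x)"
      by (simp add: algebra_simps)
    moreover have "exp (K * x) * (w' x + K * w x) \<ge> 0"
      using assms(4)[OF x] by (intro mult_nonneg_nonneg) auto
    ultimately show "\<exists>y. (?p has_real_derivative y) (at x) \<and> y \<ge> 0" by metis
  next
    show "continuous_on {x0..x1} ?p"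
      by (intro continuous_intros assms(2))
  qed
  then have "exp (K * x0) * w x0 \<le> 0" using assms(6) by simp
  then have "w x0 \<le> 0" by (simp add: mult_le_0_iff)
  with assms(5)[of x0] assms(1) show ?thesis by simp
qed

lemma wbound:
  fixes g p q C :: real
  assumes "C \<ge> 0" "\<bar>q\<bar> \<le> C * (\<bar>g\<bar> + \<bar>p\<bar>)"
  shows "\<bar>2 * g * p + 2 * p * q\<bar> \<le> (1 + 3 * C) * (g\<^sup>2 + p\<^sup>2)"
proof -
  have a: "2 * \<bar>g\<bar> * \<bar>p\<bar> \<le> g\<^sup>2 + p\<^sup>2"
    using sum_squares_bound[of "\<bar>g\<bar>" "\<bar>p\<bar>"] by (simp add: power2_eq_square)
  have b: "\<bar>p\<bar> * \<bar>q\<bar> \<le> \<bar>p\<bar> * (C * (\<bar>g\<bar> + \<bar>p\<bar>))"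
    using assms(2) by (intro mult_left_mono) auto
  have "\<bar>2 * g * p + 2 * p * q\<bar> \<le> 2 * \<bar>g\<bar> * \<bar>p\<bar> + 2 * (\<bar>p\<bar> * \<bar>q\<bar>)"
    by (simp add: abs_mult abs_triangle_ineq[THEN order_trans])
  also have "\<dots> \<le> (g\<^sup>2 + p\<^sup>2) + C * (2 * \<bar>g\<bar> * \<bar>p\<bar>) + 2 * C * p\<^sup>2"
    using a b by (simp add: algebra_simps power2_eq_square)
  also have "\<dots> \<le> (g\<^sup>2 + p\<^sup>2) + C * (g\<^sup>2 + p\<^sup>2) + 2 * C * (g\<^sup>2 + p\<^sup>2)"
    using a assms(1) by (intro add_mono mult_left_mono) auto
  finally show ?thesis by (simp add: algebra_simps)
qed

lemma sup_eq:
  fixes u0 c :: real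
  assumes "u0 > 0"
  shows "(SUP u\<in>{0..u0}. c * u) = max 0 (c * u0)"
proof (rule cSup_eq_maximum)
  show "max 0 (c * u0) \<in> (\<lambda>u. c * u) ` {0..u0}"
  proof (cases "c \<ge> 0")
    case True
    then have "max 0 (c * u0) = c * u0" using assms by simp
    then show ?thesis using assms by auto
  next
    case False
    then have "max 0 (c * u0) = c * 0" using assms mult_neg_pos[of c u0] by (simp add: max_def)
    then show ?thesis using assms by (metis atLeastAtMost_iff image_eqI order_refl less_imp_le)
  qed
  fix x assume "x \<in> (\<lambda>u. c * u) ` {0..u0}"
  then obtain u where u: "0 \<le> u" "u \<le> u0" "x = c * u" by auto
  show "x \<le> max 0 (c * u0)"
  proof (cases "c \<ge> 0")
    case True then show ?thesis using u by (simp add: mult_left_mono le_max_iff_disj)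
  next
    case False then show ?thesis using u by (simp add: mult_nonpos_nonneg le_max_iff_disj)
  qed
qed


theorem lemma2p2:
  fixes \<mu> \<sigma> u0 r \<beta> d :: real
    and h dh d2h :: "real \<Rightarrow> real"
  assumes "\<sigma> > 0" "u0 > 0" "r > 0" "\<beta> > 0" "d > 0"
    and "hjb_solution \<mu> \<sigma> u0 r \<beta> d h dh d2h"
    and "antimono_on {0..} h"
  shows "\<not> (\<exists>a b. 0 \<le> a \<and> a < b \<and> (\<forall>z\<in>{a<..<b}. d2h z = 0))"
proof
  assume "\<exists>a b. 0 \<le> a \<and> a < b \<and> (\<forall>z\<in>{a<..<b}. d2h z = 0)"
  then obtain a b where ab: "0 \<le> a" "a < b" "\<And>z. a < z \<Longrightarrow> z < b \<Longrightarrow> d2h z = 0" by auto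
  note sig = assms(1) and u0 = assms(2) and rpos = assms(3) and bet = assms(4) and dpos = assms(5)
  have Dh0: "\<And>z. z \<ge> 0 \<Longrightarrow> (h has_real_derivative dh z) (at z within {0..})"
    and cdh: "continuous_on {0..} dh"
    and Ddh1: "\<And>z. z \<in> {0..d} \<Longrightarrow> (dh has_real_derivative d2h z) (at z within {0..d})"
    and Ddh2: "\<And>z. z > d \<Longrightarrow> (dh has_real_derivative d2h z) (at z)"
    and eq0: "\<And>z. z \<ge> 0 \<Longrightarrow> - r * h z - \<mu> * dh z + \<sigma>\<^sup>2 / 2 * d2h z
               + (SUP u\<in>{0..u0}. (\<beta> + dh z) * u) = (if z > d then 1 else 0)"
    using assms(6) unfolding hjb_solution_def by auto
  define S where "S = (\<lambda>p::real. max 0 ((\<beta> + p) * u0))"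
  have eq: "\<sigma>\<^sup>2 / 2 * d2h z = (if z > d then 1 else 0) + r * h z + \<mu> * dh z - S (dh z)"
    if "z \<ge> 0" for z
  proof -
    have "(SUP u\<in>{0..u0}. (\<beta> + dh z) * u) = S (dh z)"
      using sup_eq[OF u0] by (simp add: S_def)
    with eq0[OF that] show ?thesis by linarith
  qed
  have S0: "S 0 = \<beta> * u0" using bet u0 by (simp add: S_def)
  have Slip: "\<bar>S p - S 0\<bar> \<le> u0 * \<bar>p\<bar>" for p
  proof -
    have m: "\<bar>max 0 x - max 0 y\<bar> \<le> \<bar>x - y\<bar>" for x y :: real
      by (auto simp: max_def abs_if)
    have "(\<beta> + p) * u0 - (\<beta> + 0) * u0 = p * u0" by (simp add: algebra_simps)
    with m[of "(\<beta> + p) * u0" "(\<beta> + 0) * u0"] u0 show ?thesis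
      by (simp add: S_def abs_mult mult.commute)
  qed
  have ch: "continuous_on {0..} h"
    by (rule DERIV_continuous_on) (use Dh0 in auto)
  have Dh: "(h has_real_derivative dh z) (at z)" if "z > 0" for z
  proof -
    have "(h has_real_derivative dh z) (at z within {0..})" using Dh0 that by simp
    moreover have "at z within {0..} = at z"
      using that by (intro at_within_interior) simp
    ultimately show ?thesis by simp
  qed
  have Ddh: "(dh has_real_derivative d2h z) (at z)" if "z > 0" "z \<noteq> d" for z
  proof (cases "z < d")
    case True
    then have "(dh has_real_derivative d2h z) (at z within {0..d})" using Ddh1 that by simp
    moreover have "at z within {0..d} = at z"
      using that True by (intro at_within_Icc_at) auto
    ultimately show ?thesis by simp
  next
    case False then show ?thesis using Ddh2 that by simp
  qed
  have ich: "isCont h z" if "z > 0" for z using Dh[OF that] by (rule DERIV_isCont)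
  have icdh: "isCont dh z" if "z > 0" for z
    using continuous_on_interior[OF cdh, of z] that by simp
  have F1: "dh z \<le> 0" if z0: "z \<ge> 0" for z
  proof (rule ccontr)
    assume "\<not> dh z \<le> 0"
    then have pos: "dh z > 0" by simp
    from Dh0[OF z0] have "((\<lambda>y. (h y - h z) / (y - z)) \<longlongrightarrow> dh z) (at z within {0..})"
      by (simp add: has_field_derivative_iff)
    then have "eventually (\<lambda>y. (h y - h z) / (y - z) > 0) (at z within {0..})"
      using pos by (rule order_tendstoD(1))
    then obtain \<delta> where \<delta>: "\<delta> > 0" "\<And>y. y \<in> {0..} \<Longrightarrow> y \<noteq> z \<Longrightarrow> dist y z < \<delta> \<Longrightarrow> (h y - h z) / (y - z) > 0"
      unfolding eventually_at by auto
    let ?y = "z + \<delta> / 2"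
    have "(h ?y - h z) / (?y - z) > 0" using \<delta> z0 by (intro \<delta>(2)) (auto simp: dist_real_def)
    then have "h ?y > h z" using \<delta> by (simp add: zero_less_divide_iff)
    moreover have "h ?y \<le> h z" using monotone_onD[OF assms(7), of z ?y] z0 \<delta> by simp
    ultimately show False by simp
  qed
  have tri: "\<bar>x + y - v\<bar> \<le> \<bar>x\<bar> + \<bar>y\<bar> + \<bar>v\<bar>" for x y v :: real by linarith
  define hi where "hi = (if a < d then min b d else b)"
  define p where "p = a + (hi - a) / 3"
  define q where "q = a + 2 * (hi - a) / 3"
  have hi: "a < hi" "hi \<le> b" "a < d \<Longrightarrow> hi \<le> d" using ab dpos by (auto simp: hi_def)
  have pq: "a < p" "p < q" "q < hi" unfolding p_def q_def using hi(1) by (simp_all add: field_simps)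
  have ppos: "p > 0" using pq ab by simp
  have reg: "(p > d) = (q > d)" using pq hi by (cases "a < d") auto
  have nd: "x \<noteq> d" "(x > d) = (p > d)" if "p \<le> x" "x \<le> q" for x
    using pq hi that by (cases "a < d"; auto)+
  have cdhpq: "continuous_on {p..q} dh" using ppos by (intro continuous_on_subset[OF cdh]) auto
  have dhc: "dh x = dh p" if "p \<le> x" "x \<le> q" for x
  proof (rule DERIV_isconst2[OF pq(2) cdhpq _ that])
    fix y assume y: "p < y" "y < q"
    then have "d2h y = 0" using pq hi by (intro ab(3)) auto
    then show "DERIV dh y :> 0" using Ddh[of y] nd[of y] y ppos by auto
  qed
  have hlin: "h q - dh p * q = h p - dh p * p"
  proof -
    have "(\<lambda>z. h z - dh p * z) q = (\<lambda>z. h z - dh p * z) p"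
    proof (rule DERIV_isconst_end[OF pq(2)])
      show "continuous_on {p..q} (\<lambda>z. h z - dh p * z)"
        using ch ppos by (intro continuous_intros continuous_on_subset[OF ch]) auto
      fix y assume y: "p < y" "y < q"
      have "((\<lambda>z. h z - dh p * z) has_real_derivative (dh y - dh p * 1)) (at y)"
        using y ppos by (intro derivative_intros Dh) auto
      then show "DERIV (\<lambda>z. h z - dh p * z) y :> 0" using dhc[of y] y by simp
    qed
    then show ?thesis by simp
  qed
  have d2p: "d2h p = 0" "d2h q = 0" using pq hi by (auto intro: ab(3))
  have ep: "0 = (if p > d then 1 else 0) + r * h p + \<mu> * dh p - S (dh p)"
    using eq[of p] ppos d2p by simp
  have eqq: "0 = (if q > d then 1 else 0) + r * h q + \<mu> * dh p - S (dh p)"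
    using eq[of q] ppos pq d2p dhc[of q] by simp
  have "(if p > d then 1 else 0) = (if q > d then 1 else (0::real))" using reg by simp
  then have "r * h p = r * h q" using ep eqq by linarith
  then have "h p = h q" using rpos by simp
  then have "dh p * (q - p) = 0" using hlin by (simp add: right_diff_distrib)
  then have dhp: "dh p = 0" using pq by simp
  define ind where "ind = (if p > d then 1 else (0::real))"
  define H where "H = (\<beta> * u0 - ind) / r"
  have rH: "r * H = S 0 - ind" using rpos S0 by (simp add: H_def)
  have "r * h p = r * H" using eq[of p] ppos d2p dhp rH rpos
    by (simp add: ind_def split: if_splits)
  then have hp: "h p = H" using rpos by simp
  define w where "w = (\<lambda>z. (h z - H) * (h z - H) + dh z * dh z)"
  define w' where "w' = (\<lambda>z. 2 * (h z - H) * dh z + 2 * dh z * d2h z)"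
  define C where "C = 2 * (r + \<bar>\<mu>\<bar> + u0) / \<sigma>\<^sup>2"
  have C0: "C \<ge> 0" using rpos u0 by (simp add: C_def)
  have wp: "w p = 0" using hp dhp by (simp add: w_def)
  have w0: "w z \<ge> 0" for z by (simp add: w_def)
  have wz: "h z = H \<and> dh z = 0" if "w z = 0" for z
    using that unfolding w_def by (metis add_nonneg_eq_0_iff eq_iff_diff_eq_0 mult_eq_0_iff zero_le_square)
  have Dw: "(w has_real_derivative w' z) (at z)" if "z > 0" "z \<noteq> d" for z
  proof -
    have A: "((\<lambda>z. h z - H) has_real_derivative (dh z - 0)) (at z)"
      using Dh[OF that(1)] by (intro DERIV_diff) auto
    have B: "(dh has_real_derivative d2h z) (at z)" using Ddh[OF that] .
    have "(w has_real_derivative ((dh z - 0) * (h z - H) + (h z - H) * (dh z - 0) + (d2h z * dh z + dh z * d2h z))) (at z)"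
      unfolding w_def using DERIV_add[OF DERIV_mult[OF A A] DERIV_mult[OF B B]] by simp
    then show ?thesis by (rule DERIV_cong) (simp add: w'_def algebra_simps)
  qed
  have cw: "continuous_on {x..y} w" if "x \<ge> 0" for x y
    unfolding w_def using that
    by (intro continuous_intros continuous_on_subset[OF ch] continuous_on_subset[OF cdh]) auto
  have bnd: "\<bar>w' z\<bar> \<le> (1 + 3 * C) * w z" if "z > 0" "(if z > d then 1 else 0) = ind" for z
  proof -
    have "\<sigma>\<^sup>2 / 2 * d2h z = r * (h z - H) + \<mu> * dh z - (S (dh z) - S 0)"
      using eq[of z] that rH by (simp add: algebra_simps)
    moreover have "\<bar>r * (h z - H) + \<mu> * dh z - (S (dh z) - S 0)\<bar> \<le> \<bar>r * (h z - H)\<bar> + \<bar>\<mu> * dh z\<bar> + \<bar>S (dh z) - S 0\<bar>"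
      by (rule tri)
    moreover have "\<bar>r * (h z - H)\<bar> = r * \<bar>h z - H\<bar>" using rpos by (simp add: abs_mult)
    moreover have "\<bar>\<mu> * dh z\<bar> = \<bar>\<mu>\<bar> * \<bar>dh z\<bar>" by (simp add: abs_mult)
    ultimately have "\<bar>\<sigma>\<^sup>2 / 2 * d2h z\<bar> \<le> r * \<bar>h z - H\<bar> + \<bar>\<mu>\<bar> * \<bar>dh z\<bar> + u0 * \<bar>dh z\<bar>"
      using Slip[of "dh z"] by linarith
    also have "\<dots> \<le> (r + \<bar>\<mu>\<bar> + u0) * (\<bar>h z - H\<bar> + \<bar>dh z\<bar>)"
      using rpos u0 by (simp add: algebra_simps)
    finally have "\<bar>d2h z\<bar> \<le> C * (\<bar>h z - H\<bar> + \<bar>dh z\<bar>)"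
      using sig by (simp add: C_def abs_mult field_simps)
    from wbound[OF C0 this] show ?thesis by (simp add: w_def w'_def power2_eq_square)
  qed
  show False
  proof (cases "p > d")
    case False
    then have ind0: "ind = 0" by (simp add: ind_def)
    have pd: "p \<le> d" using False by simp
    have "w d = 0"
    proof (rule gron_fwd[OF pd cw[OF less_imp_le[OF ppos]]])
      fix z assume z: "p < z" "z < d"
      show "(w has_real_derivative w' z) (at z)" using z ppos by (intro Dw) auto
      show "\<bar>w' z\<bar> \<le> (1 + 3 * C) * w z" using z ppos ind0 by (intro bnd) auto
    qed (use w0 wp in auto)
    then have hd: "h d = H" "dh d = 0" using wz by auto
    define G where "G = (\<lambda>z. r * \<bar>h z - H\<bar> + (\<bar>\<mu>\<bar> + u0) * \<bar>dh z\<bar>)"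
    have "isCont G d" unfolding G_def using ich[OF dpos] icdh[OF dpos] by (intro continuous_intros)
    then have "(G \<longlongrightarrow> 0) (at d)" using hd by (simp add: G_def isCont_def)
    then have "eventually (\<lambda>z. G z < 1/2) (at d)" by (rule order_tendstoD) simp
    then obtain \<delta> where \<delta>: "\<delta> > 0" "\<And>z. z \<noteq> d \<Longrightarrow> dist z d < \<delta> \<Longrightarrow> G z < 1/2"
      unfolding eventually_at by auto
    have d2pos: "d2h z > 0" if "d < z" "z < d + \<delta>" for z
    proof -
      have "\<sigma>\<^sup>2 / 2 * d2h z = 1 + r * (h z - H) + \<mu> * dh z - (S (dh z) - S 0)"
        using eq[of z] that dpos rH ind0 by (simp add: algebra_simps)
      moreover have "G z < 1/2" using that by (intro \<delta>(2)) (auto simp: dist_real_def)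
      moreover have "\<bar>r * (h z - H) + \<mu> * dh z - (S (dh z) - S 0)\<bar> \<le> \<bar>r * (h z - H)\<bar> + \<bar>\<mu> * dh z\<bar> + \<bar>S (dh z) - S 0\<bar>"
        by (rule tri)
      moreover have "\<bar>r * (h z - H)\<bar> = r * \<bar>h z - H\<bar>" using rpos by (simp add: abs_mult)
      moreover have "\<bar>\<mu> * dh z\<bar> = \<bar>\<mu>\<bar> * \<bar>dh z\<bar>" by (simp add: abs_mult)
      moreover have "G z = r * \<bar>h z - H\<bar> + \<bar>\<mu>\<bar> * \<bar>dh z\<bar> + u0 * \<bar>dh z\<bar>"
        by (simp add: G_def algebra_simps)
      ultimately have "\<sigma>\<^sup>2 / 2 * d2h z > 0"
        using Slip[of "dh z"] by linarith
      then show ?thesis using sig by (simp add: zero_less_mult_iff)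
    qed
    have "dh d < dh (d + \<delta> / 2)"
    proof (rule DERIV_pos_imp_increasing_open[of d "d + \<delta> / 2" dh])
      fix x assume x: "d < x" "x < d + \<delta> / 2"
      show "\<exists>y. DERIV dh x :> y \<and> y > 0"
        using x dpos \<delta> by (intro exI[of _ "d2h x"]) (auto intro: Ddh d2pos)
    next
      show "continuous_on {d..d + \<delta> / 2} dh" using dpos by (intro continuous_on_subset[OF cdh]) auto
    qed (use \<delta> in simp)
    then show False using hd F1[of "d + \<delta>/2"] dpos \<delta> by simp
  next
    case True
    then have ind1: "ind = 1" by (simp add: ind_def)
    have pd: "d \<le> p" using True by simp
    have "w d = 0"
    proof (rule gron_bwd[OF pd cw[OF less_imp_le[OF dpos]]])
      fix z assume z: "d < z" "z < p"
      show "(w has_real_derivative w' z) (at z)" using z dpos by (intro Dw) auto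
      show "\<bar>w' z\<bar> \<le> (1 + 3 * C) * w z" using z dpos ind1 by (intro bnd) auto
    qed (use w0 wp in auto)
    then have hd: "h d = H" "dh d = 0" using wz by auto
    have "\<sigma>\<^sup>2 / 2 * d2h d = -1" using eq[of d] dpos hd rH ind1 by simp
    then have neg: "d2h d < 0" using sig mult_nonneg_nonneg[of "\<sigma>\<^sup>2 / 2" "d2h d"] by (cases "d2h d < 0") auto
    from Ddh1[of d] dpos have "((\<lambda>y. (dh y - dh d) / (y - d)) \<longlongrightarrow> d2h d) (at d within {0..d})"
      by (simp add: has_field_derivative_iff)
    then have "eventually (\<lambda>y. (dh y - dh d) / (y - d) < 0) (at d within {0..d})"
      using neg by (rule order_tendstoD(2))
    then obtain \<delta> where \<delta>: "\<delta> > 0" "\<And>y. y \<in> {0..d} \<Longrightarrow> y \<noteq> d \<Longrightarrow> dist y d < \<delta> \<Longrightarrow> (dh y - dh d) / (y - d) < 0"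
      unfolding eventually_at by auto
    let ?y = "d - min \<delta> d / 2"
    have "(dh ?y - dh d) / (?y - d) < 0" using \<delta> dpos by (intro \<delta>(2)) (auto simp: dist_real_def)
    then have "dh ?y > 0" using hd \<delta> dpos by (simp add: divide_less_0_iff)
    moreover have "dh ?y \<le> 0" using dpos by (intro F1) simp
    ultimately show False by simp
  qed
qed

end
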